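(* For every integer $n>1$, the Cuntz algebra $O_n$ is not symmetrically pseudo-amenable.
   Context: The Cuntz algebra $O_n$ ($n\ge2$) is the unital $C^*$-algebra generated by elements $T_1,\dots,T_n$ satisfying $T_i^*T_i=I$ for each $i$ and $\sum_{i=1}^n T_iT_i^*=I$. For a Banach algebra $\mathfrak{U}$, $\mathfrak{U}\widehat{\otimes}\mathfrak{U}$ is the projective tensor product, with $a(b\otimes c)=ab\otimes c$, $(b\otimes c)a=b\otimes ca$, and $\pi(b\otimes c)=bc$ (extended linearly and continuously). The flip is $(b\otimes c)^{\circ}=c\otimes b$; $\mathbf{t}$ is symmetric if $\mathbf{t}^\circ=\mathbf{t}$. An approximate diagonal is a net $\{\mathbf{t}_\lambda\}$ in $\mathfrak{U}\widehat{\otimes}\mathfrak{U}$ (not necessarily bounded) with $a\mathbf{t}_\lambda-\mathbf{t}_\lambda a\to0$ and $\pi(\mathbf{t}_\lambda)a\to a$ for all $a\in\mathfrak{U}$. $\mathfrak{U}$ is symmetrically pseudo-amenable if it has an approximate diagonal consisting of symmetric elements. *)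

theory Defs
  imports "HOL-Analysis.Analysis"
begin

text \<open>Complex unital C*-algebras are modelled on a type 'a of class
  real_normed_algebra_1 + banach (so the unit has norm 1 and 1 is not 0),
  together with an element iu playing the role of i*1 (this gives the complex
  scalar multiplication) and an involution st.\<close>

definition cscale :: "'a::real_normed_algebra_1 \<Rightarrow> complex \<Rightarrow> 'a \<Rightarrow> 'a" where
  "cscale iu c x = Re c *\<^sub>R x + Im c *\<^sub>R (iu * x)"

definition cstar_algebra :: "'a::{real_normed_algebra_1,banach} \<Rightarrow> ('a \<Rightarrow> 'a) \<Rightarrow> bool" where
  "cstar_algebra iu st \<longleftrightarrow>
     iu * iu = - 1 \<and> (\<forall>x. iu * x = x * iu) \<and>
     (\<forall>c x. norm (cscale iu c x) = cmod c * norm x) \<and>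
     (\<forall>x y. st (x + y) = st x + st y) \<and> (\<forall>r x. st (r *\<^sub>R x) = r *\<^sub>R st x) \<and>
     st iu = - iu \<and> (\<forall>x. st (st x) = x) \<and> (\<forall>x y. st (x * y) = st y * st x) \<and>
     (\<forall>x. norm (st x * x) = norm x ^ 2)"

inductive_set star_gen :: "'a::real_normed_algebra_1 \<Rightarrow> ('a \<Rightarrow> 'a) \<Rightarrow> nat \<Rightarrow> (nat \<Rightarrow> 'a) \<Rightarrow> 'a set"
  for iu st n T where
  one: "1 \<in> star_gen iu st n T"
| gen: "i < n \<Longrightarrow> T i \<in> star_gen iu st n T"
| add: "x \<in> star_gen iu st n T \<Longrightarrow> y \<in> star_gen iu st n T \<Longrightarrow> x + y \<in> star_gen iu st n T"
| mult: "x \<in> star_gen iu st n T \<Longrightarrow> y \<in> star_gen iu st n T \<Longrightarrow> x * y \<in> star_gen iu st n T"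
| scale: "x \<in> star_gen iu st n T \<Longrightarrow> cscale iu c x \<in> star_gen iu st n T"
| star: "x \<in> star_gen iu st n T \<Longrightarrow> st x \<in> star_gen iu st n T"

definition is_cuntz_algebra :: "nat \<Rightarrow> 'a::{real_normed_algebra_1,banach} \<Rightarrow> ('a \<Rightarrow> 'a) \<Rightarrow> (nat \<Rightarrow> 'a) \<Rightarrow> bool" where
  "is_cuntz_algebra n iu st T \<longleftrightarrow>
     cstar_algebra iu st \<and>
     (\<forall>i<n. st (T i) * T i = 1) \<and> (\<Sum>i<n. T i * st (T i)) = 1 \<and>
     closure (star_gen iu st n T) = UNIV"

text \<open>Projective tensor product: an element of A \<^emph>\<open>projective-tensor\<close> A is represented by a
  sequence f of pairs (a_k, b_k) with sum of norm a_k * norm b_k finite, standing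
  for the sum of a_k \<otimes> b_k. Its pairing with a bounded complex-bilinear
  form phi is the sum of phi a_k b_k; the dual of the projective tensor product is
  the space of bounded bilinear forms, so the norm of a difference of two
  elements is the supremum over forms of norm at most 1.\<close>

definition tensor_rep :: "(nat \<Rightarrow> 'a::real_normed_vector \<times> 'a) \<Rightarrow> bool" where
  "tensor_rep f \<longleftrightarrow> summable (\<lambda>k. norm (fst (f k)) * norm (snd (f k)))"

definition cbilinear_form :: "'a::real_normed_algebra_1 \<Rightarrow> ('a \<Rightarrow> 'a \<Rightarrow> complex) \<Rightarrow> bool" where
  "cbilinear_form iu \<phi> \<longleftrightarrow>
     (\<forall>x y z. \<phi> (x + y) z = \<phi> x z + \<phi> y z) \<and>
     (\<forall>x y z. \<phi> x (y + z) = \<phi> x y + \<phi> x z) \<and>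
     (\<forall>r x y. \<phi> (r *\<^sub>R x) y = of_real r * \<phi> x y) \<and>
     (\<forall>r x y. \<phi> x (r *\<^sub>R y) = of_real r * \<phi> x y) \<and>
     (\<forall>x y. \<phi> (iu * x) y = \<i> * \<phi> x y) \<and>
     (\<forall>x y. \<phi> x (iu * y) = \<i> * \<phi> x y) \<and>
     (\<forall>x y. cmod (\<phi> x y) \<le> norm x * norm y)"

definition tpair :: "('a \<Rightarrow> 'a \<Rightarrow> complex) \<Rightarrow> (nat \<Rightarrow> 'a \<times> 'a) \<Rightarrow> complex" where
  "tpair \<phi> f = (\<Sum>k. \<phi> (fst (f k)) (snd (f k)))"

definition tdist :: "'a::real_normed_algebra_1 \<Rightarrow> (nat \<Rightarrow> 'a \<times> 'a) \<Rightarrow> (nat \<Rightarrow> 'a \<times> 'a) \<Rightarrow> real" where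
  "tdist iu f g = Sup {cmod (tpair \<phi> f - tpair \<phi> g) | \<phi>. cbilinear_form iu \<phi>}"

definition tlmul :: "'a::times \<Rightarrow> (nat \<Rightarrow> 'a \<times> 'a) \<Rightarrow> (nat \<Rightarrow> 'a \<times> 'a)" where
  "tlmul a f = (\<lambda>k. (a * fst (f k), snd (f k)))"

definition trmul :: "(nat \<Rightarrow> 'a \<times> 'a) \<Rightarrow> 'a::times \<Rightarrow> (nat \<Rightarrow> 'a \<times> 'a)" where
  "trmul f a = (\<lambda>k. (fst (f k), snd (f k) * a))"

definition tflip :: "(nat \<Rightarrow> 'a \<times> 'a) \<Rightarrow> (nat \<Rightarrow> 'a \<times> 'a)" where
  "tflip f = (\<lambda>k. (snd (f k), fst (f k)))"

definition tpi :: "(nat \<Rightarrow> 'a::real_normed_algebra \<times> 'a) \<Rightarrow> 'a" where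
  "tpi f = (\<Sum>k. fst (f k) * snd (f k))"

text \<open>A net indexed via a (proper) filter F: a symmetric approximate diagonal.\<close>
definition symm_approx_diagonal ::
  "'a::{real_normed_algebra_1,banach} \<Rightarrow> 'i filter \<Rightarrow> ('i \<Rightarrow> nat \<Rightarrow> 'a \<times> 'a) \<Rightarrow> bool" where
  "symm_approx_diagonal iu F t \<longleftrightarrow>
     (\<forall>j. tensor_rep (t j)) \<and>
     (\<forall>j. tdist iu (t j) (tflip (t j)) = 0) \<and>
     (\<forall>a. ((\<lambda>j. tdist iu (tlmul a (t j)) (trmul (t j) a)) \<longlongrightarrow> 0) F) \<and>
     (\<forall>a. ((\<lambda>j. tpi (t j) * a) \<longlongrightarrow> a) F)"

definition symmetrically_pseudo_amenable :: "'i itself \<Rightarrow> 'a::{real_normed_algebra_1,banach} \<Rightarrow> bool" where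
  "symmetrically_pseudo_amenable _ iu \<longleftrightarrow>
     (\<exists>(F::'i filter) t. F \<noteq> bot \<and> symm_approx_diagonal iu F t)"

end

theory Submission
  imports Defs
begin


definition sublin :: "('a::real_vector \<Rightarrow> real) \<Rightarrow> bool" where
  "sublin q \<longleftrightarrow> (\<forall>x y. q (x+y) \<le> q x + q y) \<and> (\<forall>r x. r \<ge> 0 \<longrightarrow> q (r *\<^sub>R x) = r * q x)"

lemma sublin_add: "sublin q \<Longrightarrow> q (x+y) \<le> q x + q y" by (simp add: sublin_def)
lemma sublin_scale: "sublin q \<Longrightarrow> r \<ge> 0 \<Longrightarrow> q (r *\<^sub>R x) = r * q x" by (simp add: sublin_def)
lemma sublin_0: "sublin q \<Longrightarrow> q 0 = 0"
  using sublin_scale[of q 0 0] by simp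
lemma sublin_neg: "sublin q \<Longrightarrow> - q (-x) \<le> q x"
  using sublin_add[of q x "-x"] sublin_0[of q] by simp

definition shiftf :: "('a::real_vector \<Rightarrow> real) \<Rightarrow> 'a \<Rightarrow> 'a \<Rightarrow> real" where
  "shiftf q y x = (INF t\<in>{0..}. q (x + t *\<^sub>R y) - t * q y)"

lemma shift_lb: assumes "sublin q" "t \<ge> 0" shows "- q (-x) \<le> q (x + t *\<^sub>R y) - t * q y"
proof -
  have "q (t *\<^sub>R y) \<le> q (x + t *\<^sub>R y) + q (-x)"
    using sublin_add[OF assms(1), of "x + t *\<^sub>R y" "-x"] by simp
  then show ?thesis using sublin_scale[OF assms] by simp
qed

lemma shift_bdd: "sublin q \<Longrightarrow> bdd_below ((\<lambda>t. q (x + t *\<^sub>R y) - t * q y) ` {0..})"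
  by (rule bdd_belowI2[where m="- q (-x)"]) (auto intro: shift_lb)

lemma shift_le: "sublin q \<Longrightarrow> t \<ge> 0 \<Longrightarrow> shiftf q y x \<le> q (x + t *\<^sub>R y) - t * q y"
  unfolding shiftf_def by (rule cINF_lower[OF shift_bdd]) auto

lemma shift_ge: "sublin q \<Longrightarrow> (\<And>t. t \<ge> 0 \<Longrightarrow> z \<le> q (x + t *\<^sub>R y) - t * q y) \<Longrightarrow> z \<le> shiftf q y x"
  unfolding shiftf_def by (rule cINF_greatest) auto

lemma shift_below: "sublin q \<Longrightarrow> shiftf q y x \<le> q x"
  using shift_le[of q 0 y x] by simp

lemma shift_neg: "sublin q \<Longrightarrow> shiftf q y (-y) \<le> - q y"
  using shift_le[of q 1 y "-y"] sublin_0[of q] by simp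

lemma shift_sublin: assumes q: "sublin q" shows "sublin (shiftf q y)"
proof -
  have add: "shiftf q y (a+b) \<le> shiftf q y a + shiftf q y b" for a b
  proof -
    have "shiftf q y (a+b) - (q (b + s *\<^sub>R y) - s * q y) \<le> shiftf q y a" if s: "s \<ge> 0" for s
    proof (rule shift_ge[OF q])
      fix t :: real assume t: "t \<ge> 0"
      have "shiftf q y (a+b) \<le> q ((a+b) + (t+s) *\<^sub>R y) - (t+s) * q y"
        using shift_le[OF q, of "t+s"] s t by simp
      also have "q ((a+b) + (t+s) *\<^sub>R y) \<le> q (a + t *\<^sub>R y) + q (b + s *\<^sub>R y)"
        using sublin_add[OF q, of "a + t *\<^sub>R y" "b + s *\<^sub>R y"]
        by (simp add: algebra_simps)
      finally show "shiftf q y (a+b) - (q (b + s *\<^sub>R y) - s * q y) \<le> q (a + t *\<^sub>R y) - t * q y"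
        by (simp add: algebra_simps)
    qed
    then have "shiftf q y (a+b) - shiftf q y a \<le> shiftf q y b"
      by (intro shift_ge[OF q]) (auto simp: algebra_simps)
    then show ?thesis by simp
  qed
  have sc: "shiftf q y (r *\<^sub>R a) = r * shiftf q y a" if r: "r \<ge> 0" for r a
  proof (cases "r = 0")
    case True
    have "shiftf q y 0 = 0"
    proof (rule antisym)
      show "shiftf q y 0 \<le> 0" using shift_le[OF q, of 0 y 0] sublin_0[OF q] by simp
      show "0 \<le> shiftf q y 0" by (rule shift_ge[OF q]) (simp add: sublin_scale[OF q])
    qed
    then show ?thesis using True by simp
  next
    case False
    then have rp: "r > 0" using r by simp
    show ?thesis
    proof (rule antisym)
      have "shiftf q y (r *\<^sub>R a) / r \<le> shiftf q y a"
      proof (rule shift_ge[OF q])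
        fix t :: real assume t: "t \<ge> 0"
        have "shiftf q y (r *\<^sub>R a) \<le> q (r *\<^sub>R a + (r*t) *\<^sub>R y) - (r*t) * q y"
          using shift_le[OF q, of "r*t"] rp t by simp
        also have "q (r *\<^sub>R a + (r*t) *\<^sub>R y) = r * q (a + t *\<^sub>R y)"
          using sublin_scale[OF q, of r "a + t *\<^sub>R y"] rp by (simp add: algebra_simps)
        finally show "shiftf q y (r *\<^sub>R a) / r \<le> q (a + t *\<^sub>R y) - t * q y"
          using rp by (simp add: field_simps)
      qed
      then show "shiftf q y (r *\<^sub>R a) \<le> r * shiftf q y a" using rp by (simp add: field_simps)
      show "r * shiftf q y a \<le> shiftf q y (r *\<^sub>R a)"
      proof (rule shift_ge[OF q])
        fix t :: real assume t: "t \<ge> 0"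
        have "shiftf q y a \<le> q (a + (t/r) *\<^sub>R y) - (t/r) * q y"
          using shift_le[OF q, of "t/r"] rp t by simp
        then have "r * shiftf q y a \<le> r * (q (a + (t/r) *\<^sub>R y) - (t/r) * q y)"
          using rp by simp
        also have "\<dots> = q (r *\<^sub>R (a + (t/r) *\<^sub>R y)) - t * q y"
          using sublin_scale[OF q, of r "a + (t/r) *\<^sub>R y"] rp by (simp add: right_diff_distrib)
        also have "r *\<^sub>R (a + (t/r) *\<^sub>R y) = r *\<^sub>R a + t *\<^sub>R y"
          using rp by (simp add: algebra_simps)
        finally show "r * shiftf q y a \<le> q (r *\<^sub>R a + t *\<^sub>R y) - t * q y" .
      qed
    qed
  qed
  show ?thesis unfolding sublin_def using add sc by blast
qed

lemma chain_inf_sublin: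
  assumes C: "C \<noteq> {}" "\<And>q. q \<in> C \<Longrightarrow> sublin q \<and> (\<forall>x. q x \<le> p x)"
    and p: "sublin p"
    and ch: "\<And>a b. a \<in> C \<Longrightarrow> b \<in> C \<Longrightarrow> (\<forall>x. a x \<le> b x) \<or> (\<forall>x. b x \<le> a x)"
  defines "g \<equiv> (\<lambda>x. INF q\<in>C. q x)"
  shows "sublin g" "\<And>q x. q \<in> C \<Longrightarrow> g x \<le> q x"
proof -
  have bdd: "bdd_below ((\<lambda>q. q x) ` C)" for x
  proof (rule bdd_belowI2[where m="- p (-x)"])
    fix q assume "q \<in> C"
    then have "sublin q" "q (-x) \<le> p (-x)" using C(2) by auto
    then show "- p (-x) \<le> q x" using sublin_neg[of q x] by simp
  qed
  show low: "g x \<le> q x" if "q \<in> C" for q x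
    unfolding g_def by (rule cINF_lower[OF bdd that])
  have ge: "z \<le> g x" if "\<And>q. q \<in> C \<Longrightarrow> z \<le> q x" for z x
    unfolding g_def using C(1) that by (intro cINF_greatest) auto
  have add: "g (a+b) \<le> g a + g b" for a b
  proof -
    have "g (a+b) - q2 b \<le> g a" if q2: "q2 \<in> C" for q2
    proof (rule ge)
      fix q1 assume q1: "q1 \<in> C"
      have s1: "sublin q1" and s2: "sublin q2" using C(2) q1 q2 by auto
      show "g (a+b) - q2 b \<le> q1 a"
      proof (cases "\<forall>x. q1 x \<le> q2 x")
        case True
        have "g (a+b) \<le> q1 (a+b)" using low[OF q1] .
        also have "\<dots> \<le> q1 a + q1 b" using sublin_add[OF s1] .
        finally show ?thesis using True by (smt (verit))
      next
        case False
        then have le: "\<forall>x. q2 x \<le> q1 x" using ch[OF q1 q2] by blast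
        have "g (a+b) \<le> q2 (a+b)" using low[OF q2] .
        also have "\<dots> \<le> q2 a + q2 b" using sublin_add[OF s2] .
        finally show ?thesis using le by (smt (verit))
      qed
    qed
    then have "g (a+b) - g a \<le> g b" by (intro ge) (smt (verit))
    then show ?thesis by simp
  qed
  have sc: "g (r *\<^sub>R a) = r * g a" if r: "r \<ge> 0" for r a
  proof (cases "r = 0")
    case True
    obtain q0 where q0: "q0 \<in> C" using C(1) by blast
    have "g 0 = 0"
    proof (rule antisym)
      show "g 0 \<le> 0" using low[OF q0, of 0] sublin_0[of q0] C(2)[OF q0] by simp
      show "0 \<le> g 0" by (rule ge) (use C(2) sublin_0 in force)
    qed
    then show ?thesis using True by simp
  next
    case False
    then have rp: "r > 0" using r by simp
    show ?thesis
    proof (rule antisym)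
      have "g (r *\<^sub>R a) / r \<le> g a"
      proof (rule ge)
        fix q assume q: "q \<in> C"
        have "g (r *\<^sub>R a) \<le> q (r *\<^sub>R a)" using low[OF q] .
        also have "\<dots> = r * q a" using sublin_scale[of q r a] C(2)[OF q] rp by simp
        finally show "g (r *\<^sub>R a) / r \<le> q a" using rp by (simp add: field_simps)
      qed
      then show "g (r *\<^sub>R a) \<le> r * g a" using rp by (simp add: field_simps)
      show "r * g a \<le> g (r *\<^sub>R a)"
      proof (rule ge)
        fix q assume q: "q \<in> C"
        have "g a \<le> q a" using low[OF q] .
        then have "r * g a \<le> r * q a" using rp by simp
        also have "\<dots> = q (r *\<^sub>R a)" using sublin_scale[of q r a] C(2)[OF q] rp by simp
        finally show "r * g a \<le> q (r *\<^sub>R a)" .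
      qed
    qed
  qed
  show "sublin g" unfolding sublin_def using add sc by blast
qed

lemma sublin_linear_below:
  fixes p :: "'a::real_vector \<Rightarrow> real"
  assumes p: "sublin p"
  shows "\<exists>f. (\<forall>x y. f (x+y) = f x + f y) \<and> (\<forall>r x. f (r *\<^sub>R x) = r * f x) \<and> (\<forall>x. f x \<le> p x)"
proof -
  define A where "A = {q. sublin q \<and> (\<forall>x. q x \<le> p x)}"
  define P where "P = (\<lambda>a b::'a \<Rightarrow> real. \<forall>x. b x \<le> a x)"
  have po: "partial_order_on A (relation_of P A)"
  proof (rule partial_order_on_relation_ofI)
    show "P a a" for a by (simp add: P_def)
    show "P a c" if "P a b" "P b c" for a b c using that unfolding P_def by (blast intro: order_trans)
    show "a = b" if "P a b" "P b a" for a b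
    proof
      fix x show "a x = b x" using that unfolding P_def by (simp add: order_antisym)
    qed
  qed
  have "\<exists>u \<in> A. \<forall>a \<in> C. P a u" if Cc: "C \<in> Chains (relation_of P A)" for C
  proof (cases "C = {}")
    case True
    have "p \<in> A" using p by (simp add: A_def)
    then show ?thesis using True by blast
  next
    case False
    have CA: "q \<in> A" if "q \<in> C" for q
      using Cc that unfolding Chains_def relation_of_def by blast
    define g where "g = (\<lambda>x. INF q\<in>C. q x)"
    have ch: "(\<forall>x. a x \<le> b x) \<or> (\<forall>x. b x \<le> a x)" if "a \<in> C" "b \<in> C" for a b
      using Cc that unfolding Chains_def relation_of_def P_def by blast
    have CA': "sublin q \<and> (\<forall>x. q x \<le> p x)" if "q \<in> C" for q using CA[OF that] by (simp add: A_def)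
    have r1: "sublin g" unfolding g_def
      apply (rule chain_inf_sublin(1)[of C p]) using False CA' p ch by auto
    have r2: "g x \<le> q x" if "q \<in> C" for q x unfolding g_def
      apply (rule chain_inf_sublin(2)[of C p]) using False CA' p ch that by auto
    have "g \<in> A"
    proof -
      obtain q0 where q0: "q0 \<in> C" using False by blast
      have "g x \<le> p x" for x using r2[OF q0, of x] CA'[OF q0] by (meson order_trans)
      then show ?thesis unfolding A_def using r1 by blast
    qed
    moreover have "\<forall>a \<in> C. P a g" using r2 by (simp add: P_def)
    ultimately show ?thesis by blast
  qed
  from predicate_Zorn[OF po this] obtain m where m: "m \<in> A" and mmin: "\<And>a. a \<in> A \<Longrightarrow> P m a \<Longrightarrow> a = m"
    by blast
  have ms: "sublin m" and mp: "\<And>x. m x \<le> p x" using m by (auto simp: A_def)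
  have mneg: "m (-y) = - m y" for y
  proof -
    have "shiftf m y x \<le> p x" for x using shift_below[OF ms, of y x] mp[of x] by linarith
    then have "shiftf m y \<in> A" using shift_sublin[OF ms] by (simp add: A_def)
    moreover have "P m (shiftf m y)" using shift_below[OF ms] by (simp add: P_def)
    ultimately have "shiftf m y = m" using mmin by blast
    then have "m (-y) \<le> - m y" using shift_neg[OF ms, of y] by simp
    moreover have "- m (-y) \<le> m y" using sublin_neg[OF ms] .
    ultimately show ?thesis by simp
  qed
  have madd: "m (x+y) = m x + m y" for x y
  proof (rule antisym)
    show "m (x+y) \<le> m x + m y" using sublin_add[OF ms] .
    have "m (-(x+y)) \<le> m (-x) + m (-y)" using sublin_add[OF ms, of "-x" "-y"] by (simp add: algebra_simps)
    then show "m x + m y \<le> m (x+y)" using mneg[of "x+y"] mneg[of x] mneg[of y] by simp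
  qed
  have msc: "m (r *\<^sub>R x) = r * m x" for r x
  proof (cases "r \<ge> 0")
    case True then show ?thesis using sublin_scale[OF ms] by simp
  next
    case False
    have "m (r *\<^sub>R x) = m (- ((-r) *\<^sub>R x))" by simp
    also have "\<dots> = - m ((-r) *\<^sub>R x)" by (rule mneg)
    also have "\<dots> = r * m x" using sublin_scale[OF ms, of "-r" x] False by simp
    finally show ?thesis .
  qed
  show ?thesis using madd msc mp by blast
qed



lemma exists_state:
  "\<exists>f::'a::real_normed_algebra_1 \<Rightarrow> real. (\<forall>x y. f (x+y) = f x + f y) \<and> (\<forall>r x. f (r *\<^sub>R x) = r * f x)
      \<and> (\<forall>x. f x \<le> norm x) \<and> f 1 = 1"
proof -
  have sn: "sublin (norm :: 'a \<Rightarrow> real)" unfolding sublin_def by (simp add: norm_triangle_ineq)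
  define p0 where "p0 = shiftf (norm :: 'a \<Rightarrow> real) 1"
  have sp: "sublin p0" unfolding p0_def by (rule shift_sublin[OF sn])
  obtain f where fa: "\<forall>x y. f (x+y) = f x + f y" and fs: "\<forall>r x. f (r *\<^sub>R x) = r * f x"
    and fp: "\<forall>x. f x \<le> p0 x"
    using sublin_linear_below[OF sp] by blast
  have fn: "f x \<le> norm x" for x using fp shift_below[OF sn, of 1 x] unfolding p0_def by (meson order_trans)
  have "f (-1) \<le> -1" using fp shift_neg[OF sn, of 1] unfolding p0_def by (metis norm_one order_trans)
  moreover have "f (-1) = - f 1" using fs[rule_format, of "-1" 1] by simp
  moreover have "f 1 \<le> 1" using fn[of 1] by simp
  ultimately have "f 1 = 1" by simp
  then show ?thesis using fa fs fn by blast
qed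

definition cpsi :: "('a::real_normed_algebra_1 \<Rightarrow> real) \<Rightarrow> 'a \<Rightarrow> 'a \<Rightarrow> complex" where
  "cpsi f iu x = Complex (f x) (- f (iu * x))"

locale cstar_state =
  fixes iu :: "'a::{real_normed_algebra_1,banach}" and st :: "'a \<Rightarrow> 'a" and f :: "'a \<Rightarrow> real"
  assumes cs: "cstar_algebra iu st"
    and fa: "\<And>x y. f (x+y) = f x + f y" and fs: "\<And>r x. f (r *\<^sub>R x) = r * f x"
    and fn: "\<And>x. f x \<le> norm x" and f1: "f 1 = 1"
begin

abbreviation "\<psi> \<equiv> cpsi f iu"

lemma iu_sq: "iu * iu = -1" and iu_comm: "iu * x = x * iu"
  and cnorm: "norm (cscale iu c x) = cmod c * norm x"
  using cs unfolding cstar_algebra_def by blast+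

lemma fneg: "f (-x) = - f x" using fs[of "-1" x] by (simp only: scaleR_minus1_left)

lemma psi_add: "\<psi> (x+y) = \<psi> x + \<psi> y"
  by (simp add: cpsi_def fa distrib_left complex_eq_iff)

lemma psi_scaleR: "\<psi> (r *\<^sub>R x) = of_real r * \<psi> x"
  by (simp add: cpsi_def fs complex_eq_iff)

lemma psi_iu: "\<psi> (iu * x) = \<i> * \<psi> x"
proof -
  have "iu * (iu * x) = - x" by (simp add: mult.assoc[symmetric] iu_sq)
  then show ?thesis by (simp add: cpsi_def fneg complex_eq_iff)
qed

lemma psi_cscale: "\<psi> (cscale iu c x) = c * \<psi> x"
  unfolding cscale_def psi_add psi_scaleR psi_iu
  by (simp add: complex_eq_iff algebra_simps)

lemma Re_psi: "Re (\<psi> x) = f x" by (simp add: cpsi_def)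

lemma psi_bound: "cmod (\<psi> x) \<le> norm x"
proof (cases "\<psi> x = 0")
  case True then show ?thesis by simp
next
  case False
  define c where "c = cnj (\<psi> x) / of_real (cmod (\<psi> x))"
  have cm: "cmod c = 1" using False by (simp add: c_def norm_divide)
  have "c * \<psi> x = of_real (cmod (\<psi> x))"
    using False complex_norm_square[of "\<psi> x"]
    by (simp add: c_def power2_eq_square field_simps mult.commute)
  then have "cmod (\<psi> x) = Re (\<psi> (cscale iu c x))" by (simp add: psi_cscale)
  also have "\<dots> = f (cscale iu c x)" by (rule Re_psi)
  also have "\<dots> \<le> norm (cscale iu c x)" by (rule fn)
  also have "\<dots> = norm x" by (simp add: cnorm cm)
  finally show ?thesis .
qed

lemma psi_scaleR': "\<psi> (r *\<^sub>R x) = r *\<^sub>R \<psi> x"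
  by (simp add: cpsi_def fs complex_eq_iff)

lemma psi_bl: "bounded_linear \<psi>"
  by (rule bounded_linear_intro[where K=1]) (auto simp: psi_add psi_scaleR' psi_bound)

lemma psi_one: "\<psi> 1 \<noteq> 0"
proof
  assume "\<psi> 1 = 0"
  then have "Re (\<psi> 1) = 0" by simp
  then show False using f1 Re_psi by simp
qed

lemma psi_zero: "\<psi> 0 = 0" using psi_scaleR[of 0 0] by simp

lemma psi_sum: "\<psi> (\<Sum>i<(n::nat). g i) = (\<Sum>i<n. \<psi> (g i))"
  by (induction n) (simp_all add: psi_add psi_zero)

lemma form1: assumes "norm u \<le> 1" shows "cbilinear_form iu (\<lambda>x y. \<psi> (x*u*y))"
proof -
  have b: "cmod (\<psi> (x*u*y)) \<le> norm x * norm y" for x y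
  proof -
    have "norm (x*u*y) \<le> norm x * norm u * norm y"
      by (metis mult_right_mono norm_ge_zero norm_mult_ineq order_trans)
    also have "\<dots> \<le> norm x * norm y" using assms
      by (simp add: mult.commute mult.left_commute mult_left_le_one_le)
    finally show ?thesis using psi_bound order_trans by blast
  qed
  have c: "x * u * (iu * y) = iu * (x * u * y)" for x y
    by (metis iu_comm mult.assoc)
  have c2: "(iu * x) * u * y = iu * (x * u * y)" for x y
    by (metis mult.assoc)
  show ?thesis unfolding cbilinear_form_def
    by (auto simp: distrib_left distrib_right psi_add psi_scaleR psi_iu b c c2)
qed

lemma form2: assumes "norm u \<le> 1" shows "cbilinear_form iu (\<lambda>x y. \<psi> (y*u*x))"
proof -
  have b: "cmod (\<psi> (y*u*x)) \<le> norm x * norm y" for x y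
  proof -
    have "norm (y*u*x) \<le> norm y * norm u * norm x"
      by (metis mult_right_mono norm_ge_zero norm_mult_ineq order_trans)
    also have "\<dots> \<le> norm x * norm y" using assms
      by (simp add: mult.commute mult.left_commute mult_left_le_one_le)
    finally show ?thesis using psi_bound order_trans by blast
  qed
  have c: "y * u * (iu * x) = iu * (y * u * x)" for x y
    by (metis iu_comm mult.assoc)
  have c2: "(iu * y) * u * x = iu * (y * u * x)" for x y
    by (metis mult.assoc)
  show ?thesis unfolding cbilinear_form_def
    by (auto simp: distrib_left distrib_right psi_add psi_scaleR psi_iu b c c2)
qed

end



lemma pair_summable:
  assumes "tensor_rep f" "cbilinear_form iu \<phi>"
  shows "summable (\<lambda>k. norm (\<phi> (fst (f k)) (snd (f k))))"
proof (rule summable_comparison_test)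
  show "summable (\<lambda>k. norm (fst (f k)) * norm (snd (f k)))" using assms(1) by (simp add: tensor_rep_def)
  show "\<exists>N. \<forall>k\<ge>N. norm (norm (\<phi> (fst (f k)) (snd (f k)))) \<le> norm (fst (f k)) * norm (snd (f k))"
    using assms(2) by (simp add: cbilinear_form_def)
qed

lemma pair_bound:
  assumes "tensor_rep f" "cbilinear_form iu \<phi>"
  shows "cmod (tpair \<phi> f) \<le> (\<Sum>k. norm (fst (f k)) * norm (snd (f k)))"
proof -
  have "cmod (tpair \<phi> f) \<le> (\<Sum>k. norm (\<phi> (fst (f k)) (snd (f k))))"
    unfolding tpair_def by (rule summable_norm[OF pair_summable[OF assms]])
  also have "\<dots> \<le> (\<Sum>k. norm (fst (f k)) * norm (snd (f k)))"
    apply (rule suminf_le)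
    using assms pair_summable[OF assms] by (auto simp: cbilinear_form_def tensor_rep_def)
  finally show ?thesis .
qed

lemma tdist_ge:
  assumes "tensor_rep f" "tensor_rep g" "cbilinear_form iu \<phi>"
  shows "cmod (tpair \<phi> f - tpair \<phi> g) \<le> tdist iu f g"
  unfolding tdist_def
proof (rule cSup_upper)
  show "cmod (tpair \<phi> f - tpair \<phi> g) \<in> {cmod (tpair \<phi> f - tpair \<phi> g) |\<phi>. cbilinear_form iu \<phi>}"
    using assms(3) by blast
  let ?M = "(\<Sum>k. norm (fst (f k)) * norm (snd (f k))) + (\<Sum>k. norm (fst (g k)) * norm (snd (g k)))"
  show "bdd_above {cmod (tpair \<phi> f - tpair \<phi> g) |\<phi>. cbilinear_form iu \<phi>}"
  proof (rule bdd_aboveI[where M="?M"])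
    fix x assume "x \<in> {cmod (tpair \<phi> f - tpair \<phi> g) |\<phi>. cbilinear_form iu \<phi>}"
    then obtain \<phi>' where x: "x = cmod (tpair \<phi>' f - tpair \<phi>' g)" and b: "cbilinear_form iu \<phi>'" by blast
    have "x \<le> cmod (tpair \<phi>' f) + cmod (tpair \<phi>' g)" unfolding x by (rule norm_triangle_ineq4)
    also have "\<dots> \<le> ?M" using pair_bound[OF assms(1) b] pair_bound[OF assms(2) b] by simp
    finally show "x \<le> ?M" .
  qed
qed

lemma tensor_rep_lmul:
  fixes a :: "'a::real_normed_algebra"
  assumes "tensor_rep f" shows "tensor_rep (tlmul a f)"
  unfolding tensor_rep_def tlmul_def
proof (rule summable_comparison_test)
  show "summable (\<lambda>k. norm a * (norm (fst (f k)) * norm (snd (f k))))"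
    using assms by (simp add: tensor_rep_def summable_mult)
  show "\<exists>N. \<forall>k\<ge>N. norm (norm (fst (a * fst (f k), snd (f k))) * norm (snd (a * fst (f k), snd (f k))))
      \<le> norm a * (norm (fst (f k)) * norm (snd (f k)))"
    by (auto simp: mult.assoc[symmetric] intro!: mult_right_mono norm_mult_ineq)
qed

lemma tensor_rep_rmul:
  fixes a :: "'a::real_normed_algebra"
  assumes "tensor_rep f" shows "tensor_rep (trmul f a)"
  unfolding tensor_rep_def trmul_def
proof (rule summable_comparison_test)
  show "summable (\<lambda>k. norm a * (norm (fst (f k)) * norm (snd (f k))))"
    using assms by (simp add: tensor_rep_def summable_mult)
  have "norm (fst (f k)) * norm (snd (f k) * a) \<le> norm a * (norm (fst (f k)) * norm (snd (f k)))" for k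
  proof -
    have "norm (fst (f k)) * norm (snd (f k) * a) \<le> norm (fst (f k)) * (norm (snd (f k)) * norm a)"
      by (intro mult_left_mono norm_mult_ineq) auto
    then show ?thesis by (simp add: mult_ac)
  qed
  then show "\<exists>N. \<forall>k\<ge>N. norm (norm (fst (fst (f k), snd (f k) * a)) * norm (snd (fst (f k), snd (f k) * a)))
      \<le> norm a * (norm (fst (f k)) * norm (snd (f k)))"
    by simp
qed

lemma tensor_rep_flip: "tensor_rep f \<Longrightarrow> tensor_rep (tflip f)"
  by (simp add: tensor_rep_def tflip_def mult.commute)



theorem mainTheorem4:
  fixes n :: nat and iu :: "'a::{real_normed_algebra_1,banach}"
    and st :: "'a \<Rightarrow> 'a" and T :: "nat \<Rightarrow> 'a"
  assumes "n > 1"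
    and "is_cuntz_algebra n iu st T"
  shows "\<not> symmetrically_pseudo_amenable TYPE('i) iu"
proof
  assume "symmetrically_pseudo_amenable TYPE('i) iu"
  then obtain F :: "'i filter" and t where Fb: "F \<noteq> bot" and sad: "symm_approx_diagonal iu F t"
    unfolding symmetrically_pseudo_amenable_def by blast
  have tr: "\<And>j. tensor_rep (t j)" and sym: "\<And>j. tdist iu (t j) (tflip (t j)) = 0"
    and com: "\<And>a. ((\<lambda>j. tdist iu (tlmul a (t j)) (trmul (t j) a)) \<longlongrightarrow> 0) F"
    and pi: "\<And>a. ((\<lambda>j. tpi (t j) * a) \<longlongrightarrow> a) F"
    using sad unfolding symm_approx_diagonal_def by blast+
  have cs: "cstar_algebra iu st" and Trel: "\<And>i. i < n \<Longrightarrow> st (T i) * T i = 1"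
    and Tsum: "(\<Sum>i<n. T i * st (T i)) = 1"
    using assms(2) unfolding is_cuntz_algebra_def by blast+
  obtain f :: "'a \<Rightarrow> real" where fa: "\<forall>x y. f (x+y) = f x + f y" and fs: "\<forall>r x. f (r *\<^sub>R x) = r * f x"
    and fn: "\<forall>x. f x \<le> norm x" and f1: "f 1 = 1"
    using exists_state by blast
  interpret cstar_state iu st f
    by (rule cstar_state.intro[OF cs]) (simp_all add: fa fs fn f1)
  have csa: "\<forall>x. st (st x) = x" "\<forall>x. norm (st x * x) = norm x ^ 2"
    using cs unfolding cstar_algebra_def by (simp_all only: conj_assoc) simp_all
  have stst: "st (st x) = x" and cnrm: "norm (st x * x) = norm x ^ 2" for x
    using csa by blast+
  have nT: "norm (T i) \<le> 1" and nS: "norm (st (T i)) \<le> 1" if i: "i < n" for i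
  proof -
    have "norm (T i) ^ 2 = 1" using cnrm[of "T i"] Trel[OF i] by simp
    then have "norm (T i) ^ 2 \<le> 1 ^ 2" by simp
    then show "norm (T i) \<le> 1" by (rule power2_le_imp_le) simp
    then have tn: "norm (T i) \<le> 1" .
    have "norm (st (T i)) ^ 2 = norm (T i * st (T i))" using cnrm[of "st (T i)"] stst[of "T i"] by simp
    also have "\<dots> \<le> norm (T i) * norm (st (T i))" by (rule norm_mult_ineq)
    also have "\<dots> \<le> 1 * norm (st (T i))" using tn by (intro mult_right_mono) auto
    finally have "norm (st (T i)) * norm (st (T i)) \<le> 1 * norm (st (T i))" by (simp add: power2_eq_square)
    then show "norm (st (T i)) \<le> 1"
      by (cases "norm (st (T i)) = 0") (auto simp: mult_le_cancel_right)
  qed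
  have nprod: "norm (u * v) \<le> 1" if "norm u \<le> 1" "norm v \<le> 1" for u v :: 'a
  proof -
    have "norm (u * v) \<le> norm u * norm v" by (rule norm_mult_ineq)
    also have "\<dots> \<le> 1 * 1" using that by (intro mult_mono) auto
    finally show ?thesis by simp
  qed
  define P where "P u j = tpair (\<lambda>x y. \<psi> (x*u*y)) (t j)" for u j
  have flip: "tpair (\<lambda>x y. \<psi> (y*u*x)) (t j) = P u j" if u: "norm u \<le> 1" for u j
  proof -
    have "cmod (tpair (\<lambda>x y. \<psi> (y*u*x)) (t j) - tpair (\<lambda>x y. \<psi> (y*u*x)) (tflip (t j))) \<le> 0"
      using tdist_ge[OF tr[of j] tensor_rep_flip[OF tr[of j]] form2[OF u]] sym[of j] by simp
    moreover have "tpair (\<lambda>x y. \<psi> (y*u*x)) (tflip (t j)) = P u j"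
      by (simp add: tpair_def tflip_def P_def)
    ultimately show ?thesis by simp
  qed
  have comm: "((\<lambda>j. P (c*a) j - P (a*c) j) \<longlongrightarrow> 0) F" if a: "norm a \<le> 1" and c: "norm c \<le> 1" for a c
  proof -
    let ?\<phi> = "\<lambda>x y. \<psi> (y*c*x)"
    have e1: "tpair ?\<phi> (tlmul a (t j)) = tpair (\<lambda>x y. \<psi> (y*(c*a)*x)) (t j)" for j
      by (simp add: tpair_def tlmul_def mult.assoc)
    have e2: "tpair ?\<phi> (trmul (t j) a) = tpair (\<lambda>x y. \<psi> (y*(a*c)*x)) (t j)" for j
      by (simp add: tpair_def trmul_def mult.assoc)
    have "((\<lambda>j. tpair ?\<phi> (tlmul a (t j)) - tpair ?\<phi> (trmul (t j) a)) \<longlongrightarrow> 0) F"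
    proof (rule Lim_null_comparison[OF _ com[of a]])
      show "\<forall>\<^sub>F j in F. norm (tpair ?\<phi> (tlmul a (t j)) - tpair ?\<phi> (trmul (t j) a))
          \<le> tdist iu (tlmul a (t j)) (trmul (t j) a)"
        using tdist_ge[OF tensor_rep_lmul[OF tr] tensor_rep_rmul[OF tr] form2[OF c]] by simp
    qed
    then show ?thesis
      unfolding e1 e2 using flip[OF nprod[OF c a]] flip[OF nprod[OF a c]] by simp
  qed
  have ci: "((\<lambda>j. P 1 j - P (T i * st (T i)) j) \<longlongrightarrow> 0) F" if i: "i < n" for i
    using comm[OF nT[OF i] nS[OF i]] Trel[OF i] by simp
  have lim0: "((\<lambda>j. \<Sum>i<n. (P 1 j - P (T i * st (T i)) j)) \<longlongrightarrow> 0) F"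
    by (rule tendsto_null_sum[of "{..<n}" "\<lambda>j i. P 1 j - P (T i * st (T i)) j" F]) (use ci in simp)
  have sumP: "(\<Sum>i<n. P (T i * st (T i)) j) = P 1 j" for j
  proof -
    have summ: "summable (\<lambda>k. \<psi> (fst (t j k) * (T i * st (T i)) * snd (t j k)))" if i: "i \<in> {..<n}" for i
      using i by (rule_tac summable_norm_cancel, rule_tac pair_summable[OF tr form1]) (simp add: nprod nT nS)
    have "(\<Sum>i<n. P (T i * st (T i)) j) = (\<Sum>k. \<Sum>i<n. \<psi> (fst (t j k) * (T i * st (T i)) * snd (t j k)))"
      unfolding P_def tpair_def by (rule suminf_sum[symmetric]) (rule summ)
    also have "\<dots> = (\<Sum>k. \<psi> (fst (t j k) * 1 * snd (t j k)))"
    proof (rule suminf_cong)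
      fix k
      have "(\<Sum>i<n. \<psi> (fst (t j k) * (T i * st (T i)) * snd (t j k)))
          = \<psi> (\<Sum>i<n. fst (t j k) * (T i * st (T i)) * snd (t j k))" by (rule psi_sum[symmetric])
      also have "(\<Sum>i<n. fst (t j k) * (T i * st (T i)) * snd (t j k)) = fst (t j k) * (\<Sum>i<n. T i * st (T i)) * snd (t j k)"
        by (simp add: sum_distrib_left sum_distrib_right)
      finally show "(\<Sum>i<n. \<psi> (fst (t j k) * (T i * st (T i)) * snd (t j k))) = \<psi> (fst (t j k) * 1 * snd (t j k))"
        using Tsum by simp
    qed
    finally show ?thesis by (simp add: P_def tpair_def)
  qed
  have Ppi: "P 1 j = \<psi> (tpi (t j))" for j
  proof -
    have "summable (\<lambda>k. fst (t j k) * snd (t j k))"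
    proof (rule summable_norm_cancel, rule summable_comparison_test)
      show "summable (\<lambda>k. norm (fst (t j k)) * norm (snd (t j k)))" using tr by (simp add: tensor_rep_def)
      show "\<exists>N. \<forall>k\<ge>N. norm (norm (fst (t j k) * snd (t j k))) \<le> norm (fst (t j k)) * norm (snd (t j k))"
        by (simp add: norm_mult_ineq)
    qed
    then show ?thesis
      unfolding P_def tpair_def tpi_def by (simp add: bounded_linear.suminf[OF psi_bl])
  qed
  have eq: "(\<Sum>i<n. (P 1 j - P (T i * st (T i)) j)) = (of_nat n - 1) * \<psi> (tpi (t j))" for j
    by (simp add: sum_subtractf sumP Ppi algebra_simps)
  have l1: "((\<lambda>j. (of_nat n - 1) * \<psi> (tpi (t j))) \<longlongrightarrow> 0) F" using lim0 unfolding eq .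
  have "((\<lambda>j. tpi (t j)) \<longlongrightarrow> 1) F" using pi[of 1] by simp
  then have "((\<lambda>j. \<psi> (tpi (t j))) \<longlongrightarrow> \<psi> 1) F" by (rule bounded_linear.tendsto[OF psi_bl])
  then have l2: "((\<lambda>j. (of_nat n - 1) * \<psi> (tpi (t j))) \<longlongrightarrow> (of_nat n - 1) * \<psi> 1) F"
    by (rule tendsto_mult_left)
  have "(of_nat n - 1) * \<psi> 1 = 0" using tendsto_unique[OF Fb l2 l1] .
  moreover have "(of_nat n - 1 :: complex) \<noteq> 0" using assms(1) by simp
  ultimately show False using psi_one by simp
qed


end
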